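(* Let $\mathbf{k}$ be a field, let $d \geq 1$, let $A = \mathbf{k}^{d}$, and assume that $\mathbf{k}$ has a full set of $d$-th roots of unity (i.e. $d$ distinct $d$-th roots of unity). Let $M$ be a finite-dimensional $\mathbf{k}$-vector space and let $\phi : A \to \mathrm{End}_{\mathbf{k}}(M)$ be a minimal-characteristic morphism. Then $\phi$ is a (unital) $\mathbf{k}$-algebra homomorphism.
   Context: For $a \in A$, let $\overline{\chi}_a(t) \in \mathbf{k}[t]$ denote the minimal polynomial of the left multiplication operator $\mu_L(a) : A \to A$, $x \mapsto ax$, and $\chi_a(t)$ its characteristic polynomial. A $\mathbf{k}$-linear map $\phi : A \to \mathrm{End}_{\mathbf{k}}(M)$ is called a characteristic morphism if $\chi_a(\phi(a)) = 0$ for all $a \in A$, and a minimal-characteristic morphism if moreover $\overline{\chi}_a(\phi(a)) = 0$ for all $a \in A$. *)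

theory Defs
  imports "Jordan_Normal_Form.Char_Poly"
begin

text \<open>The algebra A = k^d is modelled by vectors of dimension d ('a vec, carrier_vec d)
  with componentwise multiplication; End_k(M) for an n-dimensional space M is
  modelled by n x n matrices (carrier_mat n n).\<close>

definition cmult_vec :: "'a::field vec \<Rightarrow> 'a vec \<Rightarrow> 'a vec" where
  "cmult_vec a b = vec (dim_vec a) (\<lambda>i. a $ i * b $ i)"

definition one_alg :: "nat \<Rightarrow> 'a::field vec" where
  "one_alg d = vec d (\<lambda>_. 1)"

definition mu_L :: "'a::field vec \<Rightarrow> 'a mat" where
  "mu_L a = mat (dim_vec a) (dim_vec a) (\<lambda>(i,j). (cmult_vec a (unit_vec (dim_vec a) j)) $ i)"

definition poly_eval_mat :: "nat \<Rightarrow> 'a::field poly \<Rightarrow> 'a mat \<Rightarrow> 'a mat" where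
  "poly_eval_mat n p X =
     foldr (\<lambda>i acc. coeff p i \<cdot>\<^sub>m (X ^\<^sub>m i) + acc) [0..<Suc (degree p)] (0\<^sub>m n n)"

definition min_poly_mat :: "'a::field mat \<Rightarrow> 'a poly" where
  "min_poly_mat X = (THE p. monic p \<and> poly_eval_mat (dim_row X) p X = 0\<^sub>m (dim_row X) (dim_row X)
      \<and> (\<forall>q. q \<noteq> 0 \<and> poly_eval_mat (dim_row X) q X = 0\<^sub>m (dim_row X) (dim_row X)
               \<longrightarrow> degree p \<le> degree q))"

definition k_linear :: "nat \<Rightarrow> nat \<Rightarrow> ('a::field vec \<Rightarrow> 'a mat) \<Rightarrow> bool" where
  "k_linear d n \<phi> \<longleftrightarrow>
     (\<forall>a \<in> carrier_vec d. \<phi> a \<in> carrier_mat n n) \<and>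
     (\<forall>a \<in> carrier_vec d. \<forall>b \<in> carrier_vec d. \<phi> (a + b) = \<phi> a + \<phi> b) \<and>
     (\<forall>c. \<forall>a \<in> carrier_vec d. \<phi> (c \<cdot>\<^sub>v a) = c \<cdot>\<^sub>m \<phi> a)"

definition characteristic_morphism :: "nat \<Rightarrow> nat \<Rightarrow> ('a::field vec \<Rightarrow> 'a mat) \<Rightarrow> bool" where
  "characteristic_morphism d n \<phi> \<longleftrightarrow> k_linear d n \<phi> \<and>
     (\<forall>a \<in> carrier_vec d. poly_eval_mat n (char_poly (mu_L a)) (\<phi> a) = 0\<^sub>m n n)"

definition min_characteristic_morphism :: "nat \<Rightarrow> nat \<Rightarrow> ('a::field vec \<Rightarrow> 'a mat) \<Rightarrow> bool" where
  "min_characteristic_morphism d n \<phi> \<longleftrightarrow> characteristic_morphism d n \<phi> \<and>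
     (\<forall>a \<in> carrier_vec d. poly_eval_mat n (min_poly_mat (mu_L a)) (\<phi> a) = 0\<^sub>m n n)"

definition unital_alg_hom :: "nat \<Rightarrow> nat \<Rightarrow> ('a::field vec \<Rightarrow> 'a mat) \<Rightarrow> bool" where
  "unital_alg_hom d n \<phi> \<longleftrightarrow> k_linear d n \<phi> \<and>
     \<phi> (one_alg d) = 1\<^sub>m n \<and>
     (\<forall>a \<in> carrier_vec d. \<forall>b \<in> carrier_vec d. \<phi> (cmult_vec a b) = \<phi> a * \<phi> b)"

end

theory Submission imports Defs begin

lemma smult_smult_mat: "a \<cdot>\<^sub>m (b \<cdot>\<^sub>m (A :: 'a::comm_ring_1 mat)) = (a * b) \<cdot>\<^sub>m A"
  by (intro eq_matI) auto

lemma pow_left: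
  fixes X :: "'a::field mat"
  assumes X: "X \<in> carrier_mat n n" and Q: "Q \<in> carrier_mat n n" and QX: "Q * X = c \<cdot>\<^sub>m Q"
  shows "Q * X ^\<^sub>m i = c ^ i \<cdot>\<^sub>m Q"
proof (induction i)
  case 0 then show ?case using Q X by (intro eq_matI) auto
next
  case (Suc i)
  have "Q * X ^\<^sub>m Suc i = (Q * X ^\<^sub>m i) * X" using X Q by (simp add: assoc_mult_mat[of Q n n _ n X n])
  also have "\<dots> = (c ^ i \<cdot>\<^sub>m Q) * X" using Suc by simp
  also have "\<dots> = c ^ i \<cdot>\<^sub>m (Q * X)" using X Q by (intro mult_smult_assoc_mat[of Q n n X n]) auto
  also have "\<dots> = c ^ Suc i \<cdot>\<^sub>m Q" using QX by (simp add: smult_smult_mat mult.commute)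
  finally show ?case .
qed

lemma foldr_carrier:
  assumes X: "X \<in> carrier_mat n n"
  shows "foldr (\<lambda>i acc. coeff p i \<cdot>\<^sub>m (X ^\<^sub>m i) + acc) xs (0\<^sub>m n n) \<in> carrier_mat n n"
  using X by (induction xs) auto

lemma foldr_left:
  fixes X :: "'a::field mat"
  assumes X: "X \<in> carrier_mat n n" and Q: "Q \<in> carrier_mat n n" and QX: "Q * X = c \<cdot>\<^sub>m Q"
  shows "Q * foldr (\<lambda>i acc. coeff p i \<cdot>\<^sub>m (X ^\<^sub>m i) + acc) xs (0\<^sub>m n n)
     = (\<Sum>i\<leftarrow>xs. coeff p i * c ^ i) \<cdot>\<^sub>m Q"
proof (induction xs)
  case Nil then show ?case using Q by (intro eq_matI) auto
next
  case (Cons a xs)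
  let ?F = "foldr (\<lambda>i acc. coeff p i \<cdot>\<^sub>m (X ^\<^sub>m i) + acc) xs (0\<^sub>m n n)"
  have F: "?F \<in> carrier_mat n n" by (rule foldr_carrier[OF X])
  have "Q * (coeff p a \<cdot>\<^sub>m (X ^\<^sub>m a) + ?F) = Q * (coeff p a \<cdot>\<^sub>m (X ^\<^sub>m a)) + Q * ?F"
    using Q X F by (intro mult_add_distrib_mat[of Q n n]) auto
  also have "Q * (coeff p a \<cdot>\<^sub>m (X ^\<^sub>m a)) = coeff p a \<cdot>\<^sub>m (c ^ a \<cdot>\<^sub>m Q)"
    using Q X pow_left[OF X Q QX] mult_smult_distrib[of Q n n "X ^\<^sub>m a" n "coeff p a"] by simp
  finally show ?case using Cons Q by (simp add: smult_smult_mat add_smult_distrib_right_mat)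
qed

lemma eval_left:
  fixes X :: "'a::field mat"
  assumes X: "X \<in> carrier_mat n n" and Q: "Q \<in> carrier_mat n n" and QX: "Q * X = c \<cdot>\<^sub>m Q"
  shows "Q * poly_eval_mat n p X = poly p c \<cdot>\<^sub>m Q"
proof -
  have "(\<Sum>i\<leftarrow>[0..<Suc (degree p)]. coeff p i * c ^ i) = poly p c"
    unfolding poly_altdef atMost_upto by (simp only: interv_sum_list_conv_sum_set_nat)
  moreover have "Q * poly_eval_mat n p X = (\<Sum>i\<leftarrow>[0..<Suc (degree p)]. coeff p i * c ^ i) \<cdot>\<^sub>m Q"
    unfolding poly_eval_mat_def by (rule foldr_left[OF X Q QX])
  ultimately show ?thesis by simp
qed


definition Emat :: "nat \<Rightarrow> nat \<Rightarrow> 'a::field mat" where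
  "Emat d i = mat d d (\<lambda>(r,c). if r = i \<and> c = i then 1 else 0)"

lemma mu_L_carrier: "a \<in> carrier_vec d \<Longrightarrow> mu_L a \<in> carrier_mat d d"
  unfolding mu_L_def by auto

lemma mu_L_index: "a \<in> carrier_vec d \<Longrightarrow> r < d \<Longrightarrow> c < d \<Longrightarrow>
   mu_L a $$ (r,c) = (if r = c then a $ r else 0)"
  unfolding mu_L_def cmult_vec_def by auto

lemma Emat_mu_L:
  assumes a: "a \<in> carrier_vec d" and i: "i < d"
  shows "Emat d i * mu_L a = (a $ i) \<cdot>\<^sub>m Emat d i"
proof (rule eq_matI)
  fix r c assume r: "r < dim_row ((a $ i) \<cdot>\<^sub>m Emat d i)" and c: "c < dim_col ((a $ i) \<cdot>\<^sub>m Emat d i)"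
  then have r: "r < d" and c: "c < d" by (auto simp: Emat_def)
  have "(Emat d i * mu_L a) $$ (r,c) = (\<Sum>k<d. (if r = i \<and> k = i then 1 else 0) * mu_L a $$ (k,c))"
    using r c a by (simp add: Emat_def mu_L_carrier[OF a, simplified] scalar_prod_def atLeast0LessThan
         mu_L_def)
  also have "\<dots> = (if r = i then mu_L a $$ (i,c) else 0)"
    using i by (simp add: if_distrib[of "\<lambda>x. x * _"] sum.delta cong: if_cong)
  also have "\<dots> = ((a $ i) \<cdot>\<^sub>m Emat d i) $$ (r,c)"
    using r c i a by (simp add: Emat_def mu_L_index)
  finally show "(Emat d i * mu_L a) $$ (r,c) = ((a $ i) \<cdot>\<^sub>m Emat d i) $$ (r,c)" .
qed (use a in \<open>auto simp: Emat_def mu_L_def\<close>)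


lemma Emat_mult_index:
  assumes M: "M \<in> carrier_mat d d" and i: "i < d" and j: "j < d"
  shows "(Emat d i * M) $$ (i,j) = M $$ (i,j)"
proof -
  have "(Emat d i * M) $$ (i,j) = (\<Sum>k<d. (if k = i then 1 else 0) * M $$ (k,j))"
    using M i j by (simp add: Emat_def scalar_prod_def atLeast0LessThan)
  also have "\<dots> = M $$ (i,j)"
    using i by (simp add: if_distrib[of "\<lambda>x. x * _"] sum.delta cong: if_cong)
  finally show ?thesis .
qed

lemma annih_iff:
  fixes a :: "'a::field vec"
  assumes a: "a \<in> carrier_vec d"
  shows "poly_eval_mat d q (mu_L a) = 0\<^sub>m d d \<longleftrightarrow> (\<forall>v \<in> set\<^sub>v a. poly q v = 0)"
proof -
  let ?M = "poly_eval_mat d q (mu_L a)"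
  have M: "?M \<in> carrier_mat d d" unfolding poly_eval_mat_def
    by (rule foldr_carrier[OF mu_L_carrier[OF a]])
  have E: "Emat d i * ?M = poly q (a $ i) \<cdot>\<^sub>m Emat d i" if i: "i < d" for i
    by (rule eval_left[OF mu_L_carrier[OF a]]) (use Emat_mu_L[OF a i] in \<open>auto simp: Emat_def\<close>)
  show ?thesis
  proof
    assume z: "?M = 0\<^sub>m d d"
    show "\<forall>v \<in> set\<^sub>v a. poly q v = 0"
    proof
      fix v assume "v \<in> set\<^sub>v a"
      then obtain i where i: "i < d" and v: "v = a $ i" using a unfolding vec_set_def by auto
      have "(Emat d i * ?M) $$ (i,i) = 0" using z i by (simp add: Emat_def)
      then show "poly q v = 0" using E[OF i] i v by (simp add: Emat_def)
    qed
  next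
    assume r: "\<forall>v \<in> set\<^sub>v a. poly q v = 0"
    show "?M = 0\<^sub>m d d"
    proof (rule eq_matI)
      fix i j assume i: "i < dim_row (0\<^sub>m d d :: 'a mat)" and j: "j < dim_col (0\<^sub>m d d :: 'a mat)"
      then have i: "i < d" and j: "j < d" by auto
      have "a $ i \<in> set\<^sub>v a" using a i unfolding vec_set_def by auto
      then have "poly q (a $ i) = 0" using r by auto
      then have "?M $$ (i,j) = (poly q (a $ i) \<cdot>\<^sub>m Emat d i) $$ (i,j)"
        using E[OF i] Emat_mult_index[OF M i j] by (simp add: Emat_def i j)
      then show "?M $$ (i,j) = 0\<^sub>m d d $$ (i,j)" using i j \<open>poly q (a $ i) = 0\<close> by (simp add: Emat_def)
    qed (use M in auto)
  qed
qed

definition mp :: "'a::field vec \<Rightarrow> 'a poly" where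
  "mp a = (\<Prod>v \<in> set\<^sub>v a. [:-v, 1:])"

lemma finite_vset: "finite (set\<^sub>v a)" unfolding vec_set_def by auto

lemma mp_monic: "monic (mp a)"
  unfolding mp_def by (simp add: lead_coeff_prod)

lemma mp_degree: "degree (mp a) = card (set\<^sub>v a)"
  unfolding mp_def by (subst degree_prod_eq_sum_degree) auto

lemma mp_roots: "poly (mp a) x = 0 \<longleftrightarrow> x \<in> set\<^sub>v a"
  unfolding mp_def poly_prod using finite_vset[of a] by (simp add: prod_zero_iff)

lemma roots_degree:
  fixes q :: "'a::field poly"
  assumes "q \<noteq> 0" "\<forall>v \<in> S. poly q v = 0"
  shows "card S \<le> degree q"
proof -
  have "card S \<le> card {x. poly q x = 0}"
    using assms by (intro card_mono poly_roots_finite) auto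
  also have "\<dots> \<le> degree q" using assms by (intro card_poly_roots_bound)
  finally show ?thesis .
qed

lemma min_poly_mu_L:
  fixes a :: "'a::field vec"
  assumes a: "a \<in> carrier_vec d"
  shows "min_poly_mat (mu_L a) = mp a"
proof -
  have dr: "dim_row (mu_L a) = d" using mu_L_carrier[OF a] by auto
  show ?thesis
    unfolding min_poly_mat_def dr
  proof (rule the_equality, intro conjI allI impI)
    show "monic (mp a)" by (rule mp_monic)
    show "poly_eval_mat d (mp a) (mu_L a) = 0\<^sub>m d d" using annih_iff[OF a] mp_roots by blast
    fix q :: "'a poly" assume "q \<noteq> 0 \<and> poly_eval_mat d q (mu_L a) = 0\<^sub>m d d"
    then show "degree (mp a) \<le> degree q" using annih_iff[OF a] roots_degree mp_degree by metis
  next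
    fix p :: "'a poly"
    assume p: "monic p \<and> poly_eval_mat d p (mu_L a) = 0\<^sub>m d d \<and>
         (\<forall>q. q \<noteq> 0 \<and> poly_eval_mat d q (mu_L a) = 0\<^sub>m d d \<longrightarrow> degree p \<le> degree q)"
    have pr: "\<forall>v \<in> set\<^sub>v a. poly p v = 0" using p annih_iff[OF a] by blast
    have mpz: "mp a \<noteq> 0" using mp_monic[of a] by (metis leading_coeff_0_iff zero_neq_one)
    have mpr: "poly_eval_mat d (mp a) (mu_L a) = 0\<^sub>m d d" using annih_iff[OF a] mp_roots by blast
    have dle: "degree p \<le> card (set\<^sub>v a)" using p mpz mpr mp_degree by metis
    have pz: "p \<noteq> 0" using p by auto
    have dge: "card (set\<^sub>v a) \<le> degree p" using roots_degree[OF pz pr] .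
    show "p = mp a"
    proof (rule ccontr)
      assume ne: "p \<noteq> mp a"
      let ?r = "p - mp a"
      have rz: "?r \<noteq> 0" using ne by auto
      have rr: "\<forall>v \<in> set\<^sub>v a. poly ?r v = 0" using pr mp_roots by auto
      have "degree ?r < card (set\<^sub>v a)"
      proof -
        have dp: "degree p = card (set\<^sub>v a)" using dle dge by auto
        show ?thesis
        proof (cases "card (set\<^sub>v a) = 0")
          case True
          then have "degree p = 0" "degree (mp a) = 0" using dp mp_degree[of a] by auto
          then have "p = 1" "mp a = 1" using p mp_monic[of a] by (auto simp: monic_degree_0)
          then show ?thesis using ne by simp
        next
          case False
          have "degree ?r \<le> card (set\<^sub>v a)" by (intro degree_diff_le) (simp_all add: dp mp_degree)
          moreover have "coeff ?r (card (set\<^sub>v a)) = 0"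
            using p mp_monic[of a] dp mp_degree[of a] by simp
          ultimately show ?thesis using rz False
            by (metis eq_zero_or_degree_less le_neq_implies_less leading_coeff_0_iff)
        qed
      qed
      then show False using roots_degree[OF rz rr] by simp
    qed
  qed
qed


lemma peval_deg0:
  fixes X :: "'a::field mat"
  assumes X: "X \<in> carrier_mat n n" and dp: "degree p = 0"
  shows "poly_eval_mat n p X = coeff p 0 \<cdot>\<^sub>m 1\<^sub>m n + 0\<^sub>m n n"
  using X dp unfolding poly_eval_mat_def by simp

lemma peval_deg1:
  fixes X :: "'a::field mat"
  assumes X: "X \<in> carrier_mat n n" and dp: "degree p = 1"
  shows "poly_eval_mat n p X = coeff p 0 \<cdot>\<^sub>m 1\<^sub>m n + (coeff p 1 \<cdot>\<^sub>m X + 0\<^sub>m n n)"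
  using X dp unfolding poly_eval_mat_def by simp

lemma peval_deg2:
  fixes X :: "'a::field mat"
  assumes X: "X \<in> carrier_mat n n" and dp: "degree p = 2"
  shows "poly_eval_mat n p X = coeff p 0 \<cdot>\<^sub>m 1\<^sub>m n + (coeff p 1 \<cdot>\<^sub>m X + (coeff p 2 \<cdot>\<^sub>m (X * X) + 0\<^sub>m n n))"
proof -
  have "[0..<Suc (degree p)] = [0,1,2]" using dp by (simp add: upt_rec)
  then show ?thesis using X unfolding poly_eval_mat_def by (simp add: numeral_2_eq_2)
qed


lemma mp_one: "set\<^sub>v a = {1} \<Longrightarrow> mp a = [:-1, 1:]"
  unfolding mp_def by simp

lemma mp_zero: "set\<^sub>v a = {0} \<Longrightarrow> mp a = [:0, 1:]"
  unfolding mp_def by simp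

lemma mp_01: "set\<^sub>v a = {0,1} \<Longrightarrow> mp a = [:0, -1, 1:]"
  unfolding mp_def by simp

lemma eval_one:
  fixes X :: "'a::field mat"
  assumes X: "X \<in> carrier_mat n n" and s: "set\<^sub>v a = {1}" and z: "poly_eval_mat n (mp a) X = 0\<^sub>m n n"
  shows "X = 1\<^sub>m n"
proof -
  have "coeff [:-1, 1:] 0 \<cdot>\<^sub>m 1\<^sub>m n + (coeff [:-1, 1:] 1 \<cdot>\<^sub>m X + 0\<^sub>m n n) = 0\<^sub>m n n"
    using z peval_deg1[OF X, of "[:-1,1:]"] mp_one[OF s] by simp
  then have e: "\<And>i j. i < n \<Longrightarrow> j < n \<Longrightarrow> (coeff [:-1, 1:] 0 \<cdot>\<^sub>m 1\<^sub>m n + (coeff [:-1, 1:] 1 \<cdot>\<^sub>m X + 0\<^sub>m n n)) $$ (i,j) = 0"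
    by simp
  show ?thesis
  proof (rule eq_matI)
    fix i j assume "i < dim_row (1\<^sub>m n :: 'a mat)" "j < dim_col (1\<^sub>m n :: 'a mat)"
    then have i: "i < n" and j: "j < n" by auto
    show "X $$ (i,j) = 1\<^sub>m n $$ (i,j)" using e[OF i j] X i j by (auto split: if_splits)
  qed (use X in auto)
qed

lemma eval_zero:
  fixes X :: "'a::field mat"
  assumes X: "X \<in> carrier_mat n n" and s: "set\<^sub>v a = {0}" and z: "poly_eval_mat n (mp a) X = 0\<^sub>m n n"
  shows "X = 0\<^sub>m n n"
proof -
  have "coeff [:0, 1:] 0 \<cdot>\<^sub>m 1\<^sub>m n + (coeff [:0, 1:] 1 \<cdot>\<^sub>m X + 0\<^sub>m n n) = 0\<^sub>m n n"
    using z peval_deg1[OF X, of "[:0,1:]"] mp_zero[OF s] by simp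
  then have e: "\<And>i j. i < n \<Longrightarrow> j < n \<Longrightarrow> (coeff [:0, 1:] 0 \<cdot>\<^sub>m 1\<^sub>m n + (coeff [:0, 1:] 1 \<cdot>\<^sub>m X + 0\<^sub>m n n)) $$ (i,j) = 0"
    by simp
  show ?thesis
  proof (rule eq_matI)
    fix i j assume "i < dim_row (0\<^sub>m n n :: 'a mat)" "j < dim_col (0\<^sub>m n n :: 'a mat)"
    then have i: "i < n" and j: "j < n" by auto
    show "X $$ (i,j) = 0\<^sub>m n n $$ (i,j)" using e[OF i j] X i j by auto
  qed (use X in auto)
qed

lemma eval_01:
  fixes X :: "'a::field mat"
  assumes X: "X \<in> carrier_mat n n" and s: "set\<^sub>v a = {0,1}" and z: "poly_eval_mat n (mp a) X = 0\<^sub>m n n"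
  shows "X * X = X"
proof -
  have dg: "degree [:0, -1, 1::'a:] = 2" by simp
  have "coeff [:0, -1, 1:] 0 \<cdot>\<^sub>m 1\<^sub>m n + (coeff [:0, -1, 1:] 1 \<cdot>\<^sub>m X + (coeff [:0, -1, 1:] 2 \<cdot>\<^sub>m (X * X) + 0\<^sub>m n n)) = 0\<^sub>m n n"
    using z peval_deg2[OF X dg] mp_01[OF s] by simp
  then have e: "\<And>i j. i < n \<Longrightarrow> j < n \<Longrightarrow> (coeff [:0, -1, 1:] 0 \<cdot>\<^sub>m 1\<^sub>m n + (coeff [:0, -1, 1:] 1 \<cdot>\<^sub>m X + (coeff [:0, -1, 1:] 2 \<cdot>\<^sub>m (X * X) + 0\<^sub>m n n))) $$ (i,j) = 0"
    by simp
  show ?thesis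
  proof (rule eq_matI)
    fix i j assume "i < dim_row X" "j < dim_col X"
    then have i: "i < n" and j: "j < n" using X by auto
    have "(X * X) $$ (i,j) - X $$ (i,j) = 0" using e[OF i j] X i j by (simp add: numeral_2_eq_2)
    then show "(X * X) $$ (i,j) = X $$ (i,j)" by simp
  qed (use X in auto)
qed

lemma idem_from:
  fixes X :: "'a::field mat"
  assumes X: "X \<in> carrier_mat n n" and s: "set\<^sub>v a \<subseteq> {0,1}" "set\<^sub>v a \<noteq> {}"
    and z: "poly_eval_mat n (mp a) X = 0\<^sub>m n n"
  shows "X * X = X"
proof -
  have "set\<^sub>v a = {0} \<or> set\<^sub>v a = {1} \<or> set\<^sub>v a = {0,1}" using s by blast
  then show ?thesis
  proof (elim disjE)
    assume "set\<^sub>v a = {0}" then show ?thesis using eval_zero[OF X _ z] X by simp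
  next
    assume "set\<^sub>v a = {1}" then show ?thesis using eval_one[OF X _ z] X by simp
  next
    assume "set\<^sub>v a = {0,1}" then show ?thesis using eval_01[OF X _ z] by simp
  qed
qed


lemma anticomm:
  fixes A B :: "'a::field mat"
  assumes A: "A \<in> carrier_mat n n" and B: "B \<in> carrier_mat n n"
    and AA: "A * A = A" and BB: "B * B = B" and S: "(A + B) * (A + B) = A + B"
  shows "A * B = - (B * A)"
proof -
  have "(A + B) * (A + B) = A * (A + B) + B * (A + B)"
    using A B by (intro add_mult_distrib_mat[of _ n n]) auto
  also have "A * (A + B) = A * A + A * B" using A B by (intro mult_add_distrib_mat[of _ n n]) auto
  also have "B * (A + B) = B * A + B * B" using A B by (intro mult_add_distrib_mat[of _ n n]) auto
  finally have e: "A + A * B + (B * A + B) = A + B" using S AA BB by simp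
  show ?thesis
  proof (rule eq_matI)
    fix i j assume "i < dim_row (- (B * A))" "j < dim_col (- (B * A))"
    then have i: "i < n" and j: "j < n" using A B by auto
    have "(A + A * B + (B * A + B)) $$ (i,j) = (A + B) $$ (i,j)" using e by simp
    then have "A $$ (i,j) + (A * B) $$ (i,j) + ((B * A) $$ (i,j) + B $$ (i,j)) = A $$ (i,j) + B $$ (i,j)"
      using A B i j by (simp del: index_mult_mat(1))
    then show "(A * B) $$ (i,j) = (- (B * A)) $$ (i,j)" using A B i j by (simp del: index_mult_mat(1) add: eq_neg_iff_add_eq_0)
  qed (use A B in auto)
qed

lemma comm_idem:
  fixes A B :: "'a::field mat"
  assumes A: "A \<in> carrier_mat n n" and B: "B \<in> carrier_mat n n"
    and AA: "A * A = A" and BB: "B * B = B" and S: "(A + B) * (A + B) = A + B"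
  shows "A * B = B * A"
proof -
  have ac: "A * B = - (B * A)" by (rule anticomm[OF A B AA BB S])
  have ba: "B * A = - (A * B)" using ac A B by simp
  have "A * B = A * (A * B)" using A B AA by (simp flip: assoc_mult_mat[of A n n A n B n])
  also have "\<dots> = A * (- (B * A))" using ac by simp
  also have "\<dots> = - (A * B * A)" using A B by simp
  finally have 1: "A * B = - (A * B * A)" .
  have "B * A = B * A * A" using A B AA by simp
  also have "\<dots> = (- (A * B)) * A" using ba by simp
  also have "\<dots> = - (A * B * A)" using A B by (intro uminus_mult_left_mat) auto
  finally have 2: "B * A = - (A * B * A)" .
  show ?thesis using 1 2 by simp
qed

lemma Q_mult:
  fixes A B :: "'a::field mat"
  assumes A: "A \<in> carrier_mat n n" and B: "B \<in> carrier_mat n n"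
    and AA: "A * A = A" and BB: "B * B = B" and C: "A * B = B * A"
  shows "(A * B) * (A + y \<cdot>\<^sub>m B) = (1 + y) \<cdot>\<^sub>m (A * B)"
proof -
  have QA: "(A * B) * A = A * B" using A B AA C by (simp flip: assoc_mult_mat[of A n n A n B n])
  have QB: "(A * B) * B = A * B" using A B BB by simp
  have "(A * B) * (A + y \<cdot>\<^sub>m B) = (A * B) * A + (A * B) * (y \<cdot>\<^sub>m B)"
    using A B by (intro mult_add_distrib_mat[of _ n n]) auto
  also have "(A * B) * (y \<cdot>\<^sub>m B) = y \<cdot>\<^sub>m (A * B)"
    using A B QB mult_smult_distrib[of "A * B" n n B n y] by simp
  finally have e: "(A * B) * (A + y \<cdot>\<^sub>m B) = A * B + y \<cdot>\<^sub>m (A * B)" using QA by simp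
  show ?thesis unfolding e using A B by (intro eq_matI) (auto simp del: index_mult_mat(1) simp: algebra_simps)
qed

lemma smult_zero_cancel:
  fixes Q :: "'a::field mat"
  assumes Q: "Q \<in> carrier_mat n n" and c: "c \<noteq> 0" and z: "c \<cdot>\<^sub>m Q = 0\<^sub>m n n"
  shows "Q = 0\<^sub>m n n"
proof (rule eq_matI)
  fix i j assume "i < dim_row (0\<^sub>m n n :: 'a mat)" "j < dim_col (0\<^sub>m n n :: 'a mat)"
  then have i: "i < n" and j: "j < n" by auto
  have "(c \<cdot>\<^sub>m Q) $$ (i,j) = 0" using z i j by simp
  then show "Q $$ (i,j) = 0\<^sub>m n n $$ (i,j)" using Q i j c by simp
qed (use Q in auto)


lemma vset_sub: "set\<^sub>v v \<subseteq> S \<longleftrightarrow> (\<forall>i < dim_vec v. v $ i \<in> S)"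
  unfolding vec_set_def by auto

lemma vset_ne: "dim_vec v > 0 \<Longrightarrow> set\<^sub>v v \<noteq> {}"
  unfolding vec_set_def by auto

theorem mainTheorem2:
  fixes \<phi> :: "'a::field vec \<Rightarrow> 'a mat" and d n :: nat
  assumes "d \<ge> 1"
    and "card {x::'a. x ^ d = 1} = d"
    and "min_characteristic_morphism d n \<phi>"
  shows "unital_alg_hom d n \<phi>"
proof -
  note d1 = assms(1)
  have lin: "k_linear d n \<phi>" using assms(3)
    unfolding min_characteristic_morphism_def characteristic_morphism_def by auto
  have carr: "\<And>a. a \<in> carrier_vec d \<Longrightarrow> \<phi> a \<in> carrier_mat n n" using lin unfolding k_linear_def by auto
  have add: "\<And>a b. a \<in> carrier_vec d \<Longrightarrow> b \<in> carrier_vec d \<Longrightarrow> \<phi> (a + b) = \<phi> a + \<phi> b"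
    using lin unfolding k_linear_def by auto
  have smul: "\<And>c a. a \<in> carrier_vec d \<Longrightarrow> \<phi> (c \<cdot>\<^sub>v a) = c \<cdot>\<^sub>m \<phi> a"
    using lin unfolding k_linear_def by auto
  have mc: "\<And>a. a \<in> carrier_vec d \<Longrightarrow> poly_eval_mat n (mp a) (\<phi> a) = 0\<^sub>m n n"
    using assms(3) min_poly_mu_L unfolding min_characteristic_morphism_def by metis
  have phi0: "\<phi> (0\<^sub>v d) = 0\<^sub>m n n"
  proof -
    have "\<phi> (0\<^sub>v d) = \<phi> (0 \<cdot>\<^sub>v 0\<^sub>v d)" by (intro arg_cong[where f=\<phi>] eq_vecI) auto
    also have "\<dots> = 0 \<cdot>\<^sub>m \<phi> (0\<^sub>v d)" by (rule smul) simp
    also have "\<dots> = 0\<^sub>m n n" using carr[of "0\<^sub>v d"] by (intro eq_matI) auto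
    finally show ?thesis .
  qed
  define e where "e j = (unit_vec d j :: 'a vec)" for j
  define P where "P j = \<phi> (e j)" for j
  have ec: "e j \<in> carrier_vec d" for j unfolding e_def by simp
  have Pc: "P j \<in> carrier_mat n n" for j unfolding P_def using carr[OF ec] .
  have Pidem: "P j * P j = P j" if j: "j < d" for j
    unfolding P_def
    by (rule idem_from[OF carr[OF ec] _ _ mc[OF ec]])
       (use d1 in \<open>auto simp: vset_sub e_def unit_vec_def intro!: vset_ne\<close>)
  have Porth: "P j * P k = 0\<^sub>m n n" if j: "j < d" and k: "k < d" and jk: "j \<noteq> k" for j k
  proof -
    have d2: "d \<ge> 2" using j k jk by auto
    have sc: "e j + e k \<in> carrier_vec d" using ec by auto
    have s1: "set\<^sub>v (e j + e k) \<subseteq> {0,1}" using jk unfolding vset_sub e_def by (auto simp: unit_vec_def)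
    have s2: "set\<^sub>v (e j + e k) \<noteq> {}" using d1 unfolding e_def by (intro vset_ne) simp
    have S: "(P j + P k) * (P j + P k) = P j + P k"
      using idem_from[OF carr[OF sc] s1 s2 mc[OF sc]] add[OF ec ec] unfolding P_def by simp
    have C: "P j * P k = P k * P j" by (rule comm_idem[OF Pc Pc Pidem[OF j] Pidem[OF k] S])
    let ?R = "{x::'a. x ^ d = 1}"
    have fin: "finite ?R" using assms(2) d1 card.infinite by fastforce
    obtain y where yR: "y \<in> ?R" and ym: "y \<noteq> -1"
    proof -
      have "\<not> ?R \<subseteq> {-1}"
      proof
        assume "?R \<subseteq> {-1}"
        then have "card ?R \<le> 1" using card_mono[of "{-1::'a}" ?R] by simp
        then show False using assms(2) d2 by simp
      qed
      then show ?thesis using that by blast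
    qed
    have y0: "y \<noteq> 0" using yR d1 by (auto simp: power_0_left)
    define a where "a = e j + y \<cdot>\<^sub>v e k"
    have ac: "a \<in> carrier_vec d" unfolding a_def using ec by auto
    have pa: "\<phi> a = P j + y \<cdot>\<^sub>m P k" unfolding a_def P_def using add[OF ec] smul[OF ec] ec by simp
    have vs: "set\<^sub>v a \<subseteq> {0, 1, y}" using jk unfolding a_def e_def vset_sub by (auto simp: unit_vec_def)
    have pne: "poly (mp a) (1 + y) \<noteq> 0"
      unfolding mp_roots using vs y0 ym by (auto simp: add_eq_0_iff)
    have QX: "(P j * P k) * \<phi> a = (1 + y) \<cdot>\<^sub>m (P j * P k)"
      unfolding pa by (rule Q_mult[OF Pc Pc Pidem[OF j] Pidem[OF k] C])
    have "(P j * P k) * poly_eval_mat n (mp a) (\<phi> a) = poly (mp a) (1 + y) \<cdot>\<^sub>m (P j * P k)"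
      by (rule eval_left[OF carr[OF ac] _ QX]) (use Pc[of j] Pc[of k] in auto)
    then have "poly (mp a) (1 + y) \<cdot>\<^sub>m (P j * P k) = 0\<^sub>m n n" using mc[OF ac] Pc[of j] Pc[of k] right_mult_zero_mat[of "P j * P k" n n n] by simp
    then show ?thesis by (rule smult_zero_cancel[OF mult_carrier_mat[OF Pc Pc] pne])
  qed
  define tr where "tr k b = vec d (\<lambda>i. if i < k then b $ i else (0::'a))" for k b
  have trc: "tr k b \<in> carrier_vec d" for k b unfolding tr_def by simp
  have tr0: "tr 0 b = 0\<^sub>v d" for b unfolding tr_def by (intro eq_vecI) auto
  have trd: "b \<in> carrier_vec d \<Longrightarrow> tr d b = b" for b unfolding tr_def by (intro eq_vecI) auto
  have trS: "k < d \<Longrightarrow> tr (Suc k) b = tr k b + b $ k \<cdot>\<^sub>v e k" for k b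
    unfolding tr_def e_def by (intro eq_vecI) (auto simp: unit_vec_def less_Suc_eq)
  have phiS: "k < d \<Longrightarrow> \<phi> (tr (Suc k) b) = \<phi> (tr k b) + b $ k \<cdot>\<^sub>m P k" for k b
    unfolding trS P_def using add[OF trc] smul[OF ec] ec by simp
  have PPd: "P j * P k = (if j = k then P j else 0\<^sub>m n n)" if "j < d" "k < d" for j k
    using Pidem Porth that by auto
  have L1: "P j * \<phi> b = b $ j \<cdot>\<^sub>m P j \<and> \<phi> b * P j = b $ j \<cdot>\<^sub>m P j"
    if j: "j < d" and b: "b \<in> carrier_vec d" for j b
  proof -
    have "k \<le> d \<Longrightarrow> P j * \<phi> (tr k b) = tr k b $ j \<cdot>\<^sub>m P j \<and> \<phi> (tr k b) * P j = tr k b $ j \<cdot>\<^sub>m P j" for k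
    proof (induction k)
      case 0
      show ?case unfolding tr0 phi0 using Pc[of j] j by (auto intro!: eq_matI)
    next
      case (Suc k)
      then have k: "k < d" by simp
      let ?X = "\<phi> (tr k b)" and ?c = "b $ k"
      have Xc: "?X \<in> carrier_mat n n" using carr[OF trc] .
      have IH: "P j * ?X = tr k b $ j \<cdot>\<^sub>m P j" "?X * P j = tr k b $ j \<cdot>\<^sub>m P j" using Suc k by auto
      have e1: "P j * (?X + ?c \<cdot>\<^sub>m P k) = P j * ?X + ?c \<cdot>\<^sub>m (P j * P k)"
        using Xc Pc[of j] Pc[of k] mult_add_distrib_mat[of "P j" n n ?X n "?c \<cdot>\<^sub>m P k"]
          mult_smult_distrib[of "P j" n n "P k" n ?c] by simp
      have e2: "(?X + ?c \<cdot>\<^sub>m P k) * P j = ?X * P j + ?c \<cdot>\<^sub>m (P k * P j)"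
        using Xc Pc[of j] Pc[of k] add_mult_distrib_mat[of ?X n n "?c \<cdot>\<^sub>m P k" "P j" n]
          mult_smult_assoc_mat[of "P k" n n "P j" n ?c] by simp
      have tj: "tr (Suc k) b $ j = tr k b $ j + (if j = k then ?c else 0)"
        using j k unfolding tr_def by auto
      have Pj: "P j \<in> carrier_mat n n" by (rule Pc)
      show ?case
      proof (cases "j = k")
        case True
        show ?thesis unfolding phiS[OF k] e1 e2 IH PPd[OF j k] PPd[OF k j] tj
          using True Pj by (auto intro!: eq_matI simp: distrib_right)
      next
        case False
        show ?thesis unfolding phiS[OF k] e1 e2 IH PPd[OF j k] PPd[OF k j] tj
          using False Pj by (auto intro!: eq_matI)
      qed
    qed
    from this[of d] show ?thesis using trd[OF b] by simp
  qed
  have L2: "\<phi> (cmult_vec a b) = \<phi> a * \<phi> b" if a: "a \<in> carrier_vec d" and b: "b \<in> carrier_vec d" for a b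
  proof -
    have "k \<le> d \<Longrightarrow> \<phi> (cmult_vec (tr k a) b) = \<phi> (tr k a) * \<phi> b" for k
    proof (induction k)
      case 0
      have "cmult_vec (tr 0 a) b = 0\<^sub>v d" unfolding tr0 cmult_vec_def by (intro eq_vecI) auto
      then show ?case unfolding tr0 using carr[OF b] phi0 by simp
    next
      case (Suc k)
      then have k: "k < d" by simp
      let ?X = "\<phi> (tr k a)" and ?c = "a $ k"
      have Xc: "?X \<in> carrier_mat n n" using carr[OF trc] .
      have cv: "cmult_vec (tr (Suc k) a) b = cmult_vec (tr k a) b + (a $ k * b $ k) \<cdot>\<^sub>v e k"
        unfolding tr_def cmult_vec_def e_def using b by (intro eq_vecI) (auto simp: unit_vec_def)
      have cc: "cmult_vec (tr k a) b \<in> carrier_vec d" unfolding tr_def cmult_vec_def by simp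
      have "\<phi> (cmult_vec (tr (Suc k) a) b) = \<phi> (cmult_vec (tr k a) b) + (a $ k * b $ k) \<cdot>\<^sub>m P k"
        unfolding cv P_def using add[OF cc] smul[OF ec] ec by simp
      also have "\<dots> = ?X * \<phi> b + (a $ k * b $ k) \<cdot>\<^sub>m P k" using Suc k by simp
      also have "\<dots> = ?X * \<phi> b + ?c \<cdot>\<^sub>m (P k * \<phi> b)"
        using L1[OF k b] by (simp add: smult_smult_mat)
      also have "\<dots> = (?X + ?c \<cdot>\<^sub>m P k) * \<phi> b"
        using Xc Pc[of k] carr[OF b] add_mult_distrib_mat[of ?X n n "?c \<cdot>\<^sub>m P k" "\<phi> b" n]
          mult_smult_assoc_mat[of "P k" n n "\<phi> b" n ?c] by simp
      also have "\<dots> = \<phi> (tr (Suc k) a) * \<phi> b" unfolding phiS[OF k] ..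
      finally show ?case .
    qed
    from this[of d] show ?thesis using trd[OF a] by simp
  qed
  have U: "\<phi> (one_alg d) = 1\<^sub>m n"
  proof -
    have oc: "one_alg d \<in> carrier_vec d" unfolding one_alg_def by simp
    have "set\<^sub>v (one_alg d) = {1}" using d1 unfolding one_alg_def vec_set_def by (auto simp: image_iff intro!: exI[of _ 0])
    then show ?thesis by (rule eval_one[OF carr[OF oc] _ mc[OF oc]])
  qed
  show ?thesis unfolding unital_alg_hom_def using lin U L2 by blast
qed

end
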